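(* Let $\bm y=\bm X\bm\beta+\bm z$, where $\bm X\in\mathbb{R}^{n\times p}$ is deterministic of full column rank with unit-norm columns $\bm x_1,\dots,\bm x_p$, $\bm\beta\in\mathbb{R}^p$, and $\bm z\sim N_n(\bm 0,\sigma^2\bm I_n)$. Let $\bm\Sigma=\bm X^\top\bm X$ and, for a fixed $\lambda>0$, $\bm\Sigma_\lambda=\bm\Sigma+\lambda\bm I_p$. Let $\bm s\in\mathbb{R}^p$ have nonnegative entries with $\bm\Sigma-\operatorname{diag}(\bm s)$ positive semidefinite, and let $\widetilde{\bm X}=[\widetilde{\bm x}_1,\dots,\widetilde{\bm x}_p]\in\mathbb{R}^{n\times p}$ be a fixed matrix with $\widetilde{\bm X}^\top\bm X=\bm\Sigma-\operatorname{diag}(\bm s)$ and $\widetilde{\bm x}_j^\top\widetilde{\bm x}_j=1$ for all $j$. Define $\widehat{\bm\beta}_\lambda=\bm\Sigma_\lambda^{-1}\bm X^\top\bm y$ and $\widetilde\beta_{\lambda j}=\widehat\beta_{\lambda j}+[\bm\Sigma_\lambda^{-1}]_{jj}(\widetilde{\bm x}_j^\top\bm y-\bm x_j^\top\bm y)$. If $\beta_j=0$, then $(\widehat\beta_{\lambda j},\widetilde\beta_{\lambda j})\stackrel{d}{=}(\widetilde\beta_{\lambda j},\widehat\beta_{\lambda j})$.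
   Context: $[\bm A]_{jj}$ denotes the $j$-th diagonal entry of a matrix $\bm A$; $\stackrel{d}{=}$ denotes equality in distribution. *)

theory Defs
  imports "HOL-Analysis.Analysis" "HOL-Probability.Probability"
begin

definition diag_mat :: "real ^ 'n \<Rightarrow> real ^ 'n ^ 'n" where
  "diag_mat s = (\<chi> i j. if i = j then s $ i else 0)"

definition psd_mat :: "real ^ 'n ^ 'n \<Rightarrow> bool" where
  "psd_mat A \<longleftrightarrow> transpose A = A \<and> (\<forall>v. 0 \<le> v \<bullet> (A *v v))"

definition iso_gauss_density :: "real \<Rightarrow> real ^ 'n \<Rightarrow> ennreal" where
  "iso_gauss_density \<sigma> x = ennreal (\<Prod>i\<in>UNIV. normal_density 0 \<sigma> (x $ i))"

end

theory Submission
  imports Defs "HOL-Library.Countable"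
begin


typedef ('a::finite) wo = "UNIV :: 'a set" by auto

instance wo :: (finite) finite
proof
  have "UNIV = Abs_wo ` UNIV" by (metis Rep_wo_inverse surj_def)
  then show "finite (UNIV :: 'a wo set)" by (metis finite finite_imageI)
qed

instantiation wo :: (finite) linorder
begin
definition less_eq_wo :: "'a wo \<Rightarrow> 'a wo \<Rightarrow> bool" where
  "less_eq_wo x y \<longleftrightarrow> to_nat (Rep_wo x) \<le> to_nat (Rep_wo y)"
definition less_wo :: "'a wo \<Rightarrow> 'a wo \<Rightarrow> bool" where
  "less_wo x y \<longleftrightarrow> to_nat (Rep_wo x) < to_nat (Rep_wo y)"
instance
proof
  fix x y z :: "'a wo"
  show "(x < y) = (x \<le> y \<and> \<not> y \<le> x)" by (auto simp: less_eq_wo_def less_wo_def)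
  show "x \<le> x" by (simp add: less_eq_wo_def)
  show "x \<le> y \<Longrightarrow> y \<le> z \<Longrightarrow> x \<le> z" by (auto simp: less_eq_wo_def)
  show "x \<le> y \<Longrightarrow> y \<le> x \<Longrightarrow> x = y"
    by (metis Rep_wo_inject antisym less_eq_wo_def to_nat_split)
  show "x \<le> y \<or> y \<le> x" by (auto simp: less_eq_wo_def)
qed
end

instance wo :: (finite) wellorder
proof
  fix P :: "'a wo \<Rightarrow> bool" and a
  assume H: "\<And>x. (\<And>y. y < x \<Longrightarrow> P y) \<Longrightarrow> P x"
  show "P a"
    by (induction a rule: measure_induct_rule[of "\<lambda>x. to_nat (Rep_wo x)"]) (auto intro: H simp: less_wo_def)
qed



lemma prod_Basis_cart:
  fixes l u :: "real ^ 'n"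
  assumes "\<And>k. l $ k \<le> u $ k"
  shows "(\<Prod>b\<in>Basis. (u - l) \<bullet> b) = (\<Prod>k\<in>UNIV. u $ k - l $ k)"
proof -
  have ne: "cbox l u \<noteq> {}" using assms by (auto simp: interval_cart)
  have "(\<Prod>b\<in>Basis. (u - l) \<bullet> b) = measure lborel (cbox l u)"
    using ne by (simp add: content_cbox' inner_diff_left)
  also have "\<dots> = (\<Prod>k\<in>UNIV. u $ k - l $ k)" using ne by (simp add: content_cbox_cart)
  finally show ?thesis .
qed

lemma Basis_le_cart:
  fixes l u :: "real ^ 'n"
  assumes "\<And>b. b \<in> Basis \<Longrightarrow> l \<bullet> b \<le> u \<bullet> b"
  shows "l $ k \<le> u $ k"
  using assms[of "axis k 1"] by (auto simp: Basis_vec_def cart_eq_inner_axis)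

lemma cart_le_Basis:
  fixes l u :: "real ^ 'n"
  assumes "\<And>k. l $ k \<le> u $ k" "b \<in> Basis"
  shows "l \<bullet> b \<le> u \<bullet> b"
  using assms by (auto simp: Basis_vec_def cart_eq_inner_axis)

lemma perm_vec_cont: "continuous_on UNIV (\<lambda>x::real^'a. \<chi> k. x $ \<pi> k)"
  by (intro continuous_on_vec_lambda continuous_intros)

lemma lborel_perm:
  fixes \<pi> :: "'b::finite \<Rightarrow> 'a::finite"
  assumes "bij \<pi>"
  shows "distr lborel borel (\<lambda>x::real^'a. (\<chi> k. x $ \<pi> k) :: real^'b) = lborel"
proof (rule lborel_eqI[symmetric])
  let ?R = "(\<lambda>x::real^'a. (\<chi> k. x $ \<pi> k) :: real^'b)"
  have meas: "?R \<in> borel_measurable borel"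
    by (intro borel_measurable_continuous_onI perm_vec_cont)
  fix l u :: "real^'b"
  assume "\<And>b. b \<in> Basis \<Longrightarrow> l \<bullet> b \<le> u \<bullet> b"
  then have le: "\<And>k. l $ k \<le> u $ k" by (rule Basis_le_cart)
  let ?ip = "inv \<pi>"
  define l' :: "real^'a" where "l' = (\<chi> i. l $ ?ip i)"
  define u' :: "real^'a" where "u' = (\<chi> i. u $ ?ip i)"
  have pi_ip: "\<pi> (?ip i) = i" for i using assms by (meson bij_inv_eq_iff)
  have ip_pi: "?ip (\<pi> k) = k" for k using assms by (simp add: bij_is_inj)
  have pre: "?R -` box l u = box l' u'"
  proof (auto simp: mem_box_cart l'_def u'_def)
    fix x :: "real^'a" and i
    assume "\<forall>k. l $ k < x $ \<pi> k \<and> x $ \<pi> k < u $ k"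
    then show "l $ ?ip i < x $ i" "x $ i < u $ ?ip i" using pi_ip[of i] by metis+
  next
    fix x :: "real^'a" and k
    assume "\<forall>i. l $ ?ip i < x $ i \<and> x $ i < u $ ?ip i"
    then show "l $ k < x $ \<pi> k" "x $ \<pi> k < u $ k" using ip_pi[of k] by metis+
  qed
  have le': "\<And>i. l' $ i \<le> u' $ i" using le by (simp add: l'_def u'_def)
  have "emeasure (distr lborel borel ?R) (box l u) = emeasure lborel (box l' u')"
    using meas by (simp add: emeasure_distr pre)
  also have "\<dots> = (\<Prod>i\<in>UNIV. u' $ i - l' $ i)"
    using le' cart_le_Basis[of l' u'] by (simp add: prod_Basis_cart[symmetric] le')
  also have "\<dots> = (\<Prod>i\<in>UNIV. u $ ?ip i - l $ ?ip i)" by (simp add: l'_def u'_def)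
  also have "\<dots> = (\<Prod>k\<in>UNIV. u $ k - l $ k)"
    using prod.reindex_bij_betw[of ?ip UNIV UNIV "\<lambda>k. u $ k - l $ k"] assms
    by (simp add: bij_betw_inv_into bij_imp_bij_inv)
  also have "\<dots> = (\<Prod>b\<in>Basis. (u - l) \<bullet> b)" using le by (simp add: prod_Basis_cart)
  finally show "emeasure (distr lborel borel ?R) (box l u) = (\<Prod>b\<in>Basis. (u - l) \<bullet> b)" .
qed simp



lemma orth_meas:
  fixes H :: "'a::euclidean_space \<Rightarrow> 'b::euclidean_space"
  assumes "orthogonal_transformation H"
  shows "H \<in> borel_measurable borel"
proof -
  have "linear H" using assms by (simp add: orthogonal_transformation_linear)
  then have "bounded_linear H" by (simp add: linear_conv_bounded_linear)
  then show ?thesis by (intro borel_measurable_continuous_onI linear_continuous_on)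
qed

lemma lborel_orth_wo:
  fixes H :: "real^'m::{finite,wellorder} \<Rightarrow> real^'m::_"
  assumes orth: "orthogonal_transformation H" and inv: "\<And>x. H (H x) = x"
  shows "distr lborel borel H = lborel"
proof (rule lborel_eqI[symmetric])
  have meas: "H \<in> borel_measurable borel" using orth by (rule orth_meas)
  fix l u :: "real^'m::_"
  assume le: "\<And>b. b \<in> Basis \<Longrightarrow> l \<bullet> b \<le> u \<bullet> b"
  have pre: "H -` box l u = H ` box l u"
    by (auto, metis inv image_eqI, simp add: inv)
  have sb: "H ` box l u \<in> sets borel"
    using measurable_sets_borel[OF meas, of "box l u"] pre by simp
  have "emeasure (distr lborel borel H) (box l u) = emeasure lborel (H ` box l u)"
    using meas by (simp add: emeasure_distr pre)
  also have "\<dots> = emeasure lebesgue (H ` box l u)" using sb by simp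
  also have "\<dots> = ennreal (measure lebesgue (H ` box l u))"
    using measurable_orthogonal_image[OF orth, of "box l u"] by (simp add: emeasure_eq_measure2)
  also have "\<dots> = ennreal (measure lebesgue (box l u))"
    using measure_orthogonal_image[OF orth, of "box l u"] by simp
  also have "\<dots> = emeasure lebesgue (box l u)" by (simp add: emeasure_eq_measure2)
  also have "\<dots> = emeasure lborel (box l u)" by simp
  also have "\<dots> = (\<Prod>b\<in>Basis. (u - l) \<bullet> b)" using le by simp
  finally show "emeasure (distr lborel borel H) (box l u) = (\<Prod>b\<in>Basis. (u - l) \<bullet> b)" .
qed simp

definition toW :: "real^'n::finite \<Rightarrow> real^('n wo)" where
  "toW x = (\<chi> k. x $ Rep_wo k)"
definition fromW :: "real^('n::finite wo) \<Rightarrow> real^'n" where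
  "fromW y = (\<chi> i. y $ Abs_wo i)"

lemma bij_Rep_wo: "bij Rep_wo"
  by (metis Abs_wo_inverse Rep_wo_inverse UNIV_I bij_betw_byWitness subsetI)
lemma bij_Abs_wo: "bij Abs_wo"
  by (metis Abs_wo_inverse Rep_wo_inverse UNIV_I bij_betw_byWitness subsetI)

lemma toW_fromW[simp]: "toW (fromW y) = y" by (simp add: toW_def fromW_def Rep_wo_inverse)
lemma fromW_toW[simp]: "fromW (toW x) = x" by (simp add: toW_def fromW_def Abs_wo_inverse)

lemma lborel_toW: "distr lborel borel toW = (lborel :: (real^('n::finite wo)) measure)"
  unfolding toW_def[abs_def] by (rule lborel_perm[OF bij_Rep_wo])
lemma lborel_fromW: "distr lborel borel fromW = (lborel :: (real^('n::finite)) measure)"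
  unfolding fromW_def[abs_def] by (rule lborel_perm[OF bij_Abs_wo])

lemma orth_toW: "orthogonal_transformation (toW :: real^'n::finite \<Rightarrow> _)"
proof -
  have "linear (toW :: real^'n::finite \<Rightarrow> _)"
    by (rule linearI) (simp_all add: toW_def vec_eq_iff)
  moreover have "toW v \<bullet> toW w = v \<bullet> w" for v w :: "real^'n"
  proof -
    have "toW v \<bullet> toW w = (\<Sum>k\<in>UNIV. v $ Rep_wo k * w $ Rep_wo k)"
      by (simp add: inner_vec_def toW_def)
    also have "\<dots> = (\<Sum>i\<in>UNIV. v $ i * w $ i)"
      using sum.reindex_bij_betw[OF bij_Rep_wo, of "\<lambda>i. v $ i * w $ i"] by simp
    finally show ?thesis by (simp add: inner_vec_def)
  qed
  ultimately show ?thesis by (simp add: orthogonal_transformation_def)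
qed

lemma orth_fromW: "orthogonal_transformation (fromW :: _ \<Rightarrow> real^'n::finite)"
proof -
  have "linear (fromW :: _ \<Rightarrow> real^'n::finite)"
    by (rule linearI) (simp_all add: fromW_def vec_eq_iff)
  moreover have "fromW v \<bullet> fromW w = v \<bullet> w" for v w :: "real^'n wo"
    by (metis orth_toW orthogonal_transformation_def toW_fromW)
  ultimately show ?thesis by (simp add: orthogonal_transformation_def)
qed

lemma lborel_orth:
  fixes H :: "real^'n::finite \<Rightarrow> real^'n"
  assumes orth: "orthogonal_transformation H" and inv: "\<And>x. H (H x) = x"
  shows "distr lborel borel H = lborel"
proof -
  define H' :: "real^('n wo) \<Rightarrow> real^('n wo)" where "H' = toW \<circ> H \<circ> fromW"
  have oH': "orthogonal_transformation H'"
    unfolding H'_def by (intro orthogonal_transformation_compose orth orth_toW orth_fromW)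
  have iH': "H' (H' x) = x" for x by (simp add: H'_def inv)
  have H'l: "distr lborel borel H' = lborel" by (rule lborel_orth_wo[OF oH' iH'])
  have eq: "H = fromW \<circ> H' \<circ> toW" by (simp add: H'_def fun_eq_iff)
  have m1: "toW \<in> borel_measurable (borel :: (real^'n) measure)" by (rule orth_meas[OF orth_toW])
  have m2: "H' \<in> borel_measurable borel" by (rule orth_meas[OF oH'])
  have m3: "fromW \<in> borel_measurable (borel :: (real^'n wo) measure)" by (rule orth_meas[OF orth_fromW])
  have "distr lborel borel H = distr (distr (distr lborel borel toW) borel H') borel fromW"
    using m1 m2 m3 by (simp add: distr_distr eq comp_assoc)
  also have "\<dots> = lborel" by (simp add: lborel_toW H'l lborel_fromW)
  finally show ?thesis .
qed



lemma gauss_prod: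
  fixes x :: "real^'n"
  shows "(\<Prod>i\<in>UNIV. normal_density 0 \<sigma> (x$i)) = (1/sqrt(2*pi*\<sigma>\<^sup>2))^CARD('n) * exp(-(x\<bullet>x)/(2*\<sigma>\<^sup>2))"
proof -
  have "(\<Prod>i\<in>UNIV. normal_density 0 \<sigma> (x$i)) = (\<Prod>i\<in>UNIV. (1/sqrt(2*pi*\<sigma>\<^sup>2)) * exp(-(x$i)\<^sup>2/(2*\<sigma>\<^sup>2)))"
    by (simp add: normal_density_def)
  also have "\<dots> = (1/sqrt(2*pi*\<sigma>\<^sup>2))^CARD('n) * exp (\<Sum>i\<in>UNIV. -(x$i)\<^sup>2/(2*\<sigma>\<^sup>2))"
    by (simp only: prod.distrib exp_sum[OF finite] prod_constant card_UNIV_def)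
  also have "(\<Sum>i\<in>UNIV. -(x$i)\<^sup>2/(2*\<sigma>\<^sup>2)) = -(x\<bullet>x)/(2*\<sigma>\<^sup>2)"
    by (simp add: inner_vec_def sum_divide_distrib[symmetric] sum_negf power2_eq_square)
  finally show ?thesis .
qed

lemma gauss_inv:
  fixes H :: "real^'n \<Rightarrow> real^'n"
  assumes "orthogonal_transformation H"
  shows "iso_gauss_density \<sigma> (H x) = iso_gauss_density \<sigma> x"
  using assms by (simp add: iso_gauss_density_def gauss_prod orthogonal_transformation_def)

lemma gauss_meas: "iso_gauss_density \<sigma> \<in> borel_measurable (borel :: (real^'n) measure)"
  unfolding iso_gauss_density_def gauss_prod by measurable

lemma distr_density_inv:
  fixes H :: "real^'n \<Rightarrow> real^'n"
  assumes orth: "orthogonal_transformation H" and inv: "\<And>x. H (H x) = x"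
    and g: "g \<in> borel_measurable borel" and gH: "\<And>x. g (H x) = g x"
  shows "distr (density lborel g) borel H = density lborel g"
proof -
  have m: "H \<in> borel_measurable borel" by (rule orth_meas[OF orth])
  have m1: "H \<in> measurable lborel borel" using m by simp
  have m2: "H \<in> measurable borel lborel" using m by simp
  have "distr (density (distr lborel borel H) g) lborel H = density lborel (g \<circ> H)"
    by (rule distr_density_distr[OF m1 m2]) (simp_all add: inv g)
  then have "distr (density lborel g) lborel H = density lborel g"
    by (simp add: lborel_orth[OF orth inv] comp_def gH)
  moreover have "distr (density lborel g) borel H = distr (density lborel g) lborel H"
    by (rule distr_cong) simp_all
  ultimately show ?thesis by simp
qed

lemma gauss_orth_invariant:
  fixes H :: "real^'n \<Rightarrow> real^'n" and z :: "'w \<Rightarrow> real^'n"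
  assumes d: "distributed M lborel z (iso_gauss_density \<sigma>)"
    and orth: "orthogonal_transformation H" and inv: "\<And>x. H (H x) = x"
  shows "distr M borel (\<lambda>\<omega>. H (z \<omega>)) = distr M borel z"
proof -
  have zm: "z \<in> measurable M borel" using distributed_measurable[OF d] by simp
  have m: "H \<in> borel_measurable borel" by (rule orth_meas[OF orth])
  have N: "distr M borel z = density lborel (iso_gauss_density \<sigma>)"
  proof -
    have "distr M borel z = distr M lborel z" by (rule distr_cong) simp_all
    also have "\<dots> = density lborel (iso_gauss_density \<sigma>)"
      by (rule distributed_distr_eq_density[OF d])
    finally show ?thesis .
  qed
  have "distr M borel (\<lambda>\<omega>. H (z \<omega>)) = distr (distr M borel z) borel H"
    using zm m by (simp add: distr_distr comp_def)
  also have "\<dots> = distr M borel z"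
    unfolding N by (rule distr_density_inv[OF orth inv gauss_meas]) (rule gauss_inv[OF orth])
  finally show ?thesis .
qed



lemma mv_nth: "(A *v v) $ j = (A $ j) \<bullet> v"
  by (simp add: matrix_vector_mult_def inner_vec_def)

lemma mv_inner: "((X::real^'p^'n) *v r) \<bullet> y = r \<bullet> (transpose X *v y)"
  by (simp add: matrix_vector_mult_def inner_vec_def transpose_def sum_distrib_left sum_distrib_right
      algebra_simps) (rule sum.swap)

lemma mm_entry: "((transpose (A::real^'p^'n)) ** (B::real^'q^'n)) $ i $ k = column i A \<bullet> column k B"
  by (simp add: matrix_matrix_mult_def transpose_def column_def inner_vec_def mult.commute)

lemma col_mv: "column j (A::real^'p^'n) \<bullet> ((B::real^'q^'n) *v v) = ((transpose A ** B) *v v) $ j"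
  by (simp add: matrix_vector_mult_def matrix_matrix_mult_def transpose_def column_def inner_vec_def
      sum_distrib_left sum_distrib_right algebra_simps) (rule sum.swap)

lemma tmv_col: "(transpose (A::real^'p^'n) *v column j (B::real^'q^'n)) $ k = column k A \<bullet> column j B"
  by (simp add: matrix_vector_mult_def transpose_def column_def inner_vec_def mult.commute)

lemma diag_mv: "(diag_mat s *v v) $ j = s $ j * v $ j"
  by (simp add: diag_mat_def matrix_vector_mult_def if_distrib[of "\<lambda>c. c * _"] cong: if_cong)

lemma diag_entry: "diag_mat s $ i $ k = (if i = k then s $ i else 0)"
  by (simp add: diag_mat_def)



lemma refl_props:
  fixes a b :: "'a::real_inner"
  assumes ab: "a \<bullet> a = b \<bullet> b" and ne: "a \<noteq> b"
  defines "u \<equiv> a - b"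
  defines "H \<equiv> (\<lambda>x. x - (2 * (u \<bullet> x) / (u \<bullet> u)) *\<^sub>R u)"
  shows "orthogonal_transformation H" "\<And>x. H (H x) = x"
    "\<And>x. a \<bullet> H x = b \<bullet> x" "\<And>x. b \<bullet> H x = a \<bullet> x"
proof -
  have uu: "u \<bullet> u \<noteq> 0" using ne by (simp add: u_def)
  have ua: "2 * (u \<bullet> a) = u \<bullet> u" using ab by (simp add: u_def inner_diff_left inner_diff_right inner_commute)
  have ub: "2 * (u \<bullet> b) = - (u \<bullet> u)" using ab by (simp add: u_def inner_diff_left inner_diff_right inner_commute)
  have lin: "linear H"
    by (rule linearI) (simp_all add: H_def inner_add_right inner_scaleR_right algebra_simps add_divide_distrib)
  have "H v \<bullet> H w = v \<bullet> w" for v w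
    using uu by (simp add: H_def inner_diff_left inner_diff_right inner_commute field_simps power2_eq_square)
  then show "orthogonal_transformation H" using lin by (simp add: orthogonal_transformation_def)
  show "H (H x) = x" for x
  proof -
    have "u \<bullet> H x = - (u \<bullet> x)" using uu by (simp add: H_def inner_diff_right field_simps)
    then show ?thesis using uu by (simp add: H_def algebra_simps)
  qed
  show "a \<bullet> H x = b \<bullet> x" for x
  proof -
    have "a \<bullet> H x = a \<bullet> x - (2 * (u \<bullet> x) / (u \<bullet> u)) * (u \<bullet> a)"
      by (simp add: H_def inner_diff_right inner_commute)
    also have "\<dots> = a \<bullet> x - u \<bullet> x" using uu ua by (simp add: field_simps)
    finally show ?thesis by (simp add: u_def inner_diff_left inner_diff_right inner_commute)
  qed
  show "b \<bullet> H x = a \<bullet> x" for x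
  proof -
    have "b \<bullet> H x = b \<bullet> x - (2 * (u \<bullet> x) / (u \<bullet> u)) * (u \<bullet> b)"
      by (simp add: H_def inner_diff_right inner_commute)
    also have "\<dots> = b \<bullet> x + u \<bullet> x"
    proof -
      have "(2 * (u \<bullet> x) / (u \<bullet> u)) * (u \<bullet> b) = (u \<bullet> x) * (2 * (u \<bullet> b)) / (u \<bullet> u)" by simp
      also have "\<dots> = - (u \<bullet> x)" using uu ub by simp
      finally show ?thesis by simp
    qed
    finally show ?thesis by (simp add: u_def inner_diff_left inner_diff_right inner_commute)
  qed
qed



lemma swap_general:
  fixes a b c :: "real^'n" and z :: "'w \<Rightarrow> real^'n" and cst :: real
  assumes d: "distributed M lborel z (iso_gauss_density \<sigma>)"
    and ab: "a \<bullet> a = b \<bullet> b"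
  shows "distr M borel (\<lambda>\<omega>. (cst + a \<bullet> z \<omega>, cst + b \<bullet> z \<omega>))
       = distr M borel (\<lambda>\<omega>. (cst + b \<bullet> z \<omega>, cst + a \<bullet> z \<omega>))"
proof (cases "a = b")
  case True then show ?thesis by simp
next
  case False
  have "\<exists>H. orthogonal_transformation H \<and> (\<forall>x. H (H x) = x) \<and> (\<forall>x. a \<bullet> H x = b \<bullet> x) \<and> (\<forall>x. b \<bullet> H x = a \<bullet> x)"
    using refl_props[OF ab False] by blast
  then obtain H where R: "orthogonal_transformation H" "\<And>x. H (H x) = x" "\<And>x. a \<bullet> H x = b \<bullet> x" "\<And>x. b \<bullet> H x = a \<bullet> x"
    by blast
  define F where "F = (\<lambda>w::real^'n. (cst + a \<bullet> w, cst + b \<bullet> w))"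
  have Fm: "F \<in> borel_measurable borel"
    unfolding F_def by (intro borel_measurable_continuous_onI continuous_intros)
  have zm: "z \<in> measurable M borel" using distributed_measurable[OF d] by simp
  have Hm: "H \<in> borel_measurable borel" by (rule orth_meas[OF R(1)])
  have "distr M borel (\<lambda>\<omega>. (cst + b \<bullet> z \<omega>, cst + a \<bullet> z \<omega>)) = distr M borel (F \<circ> (\<lambda>\<omega>. H (z \<omega>)))"
    by (simp add: F_def R(3,4) comp_def)
  also have "\<dots> = distr (distr M borel (\<lambda>\<omega>. H (z \<omega>))) borel F"
    using Fm Hm zm by (simp add: distr_distr)
  also have "\<dots> = distr (distr M borel z) borel F"
    by (simp add: gauss_orth_invariant[OF d R(1) R(2)])
  also have "\<dots> = distr M borel (F \<circ> z)"
    using Fm zm by (simp add: distr_distr)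
  finally show ?thesis by (simp add: F_def comp_def)
qed



theorem corollary2p1:
  fixes M :: "'w measure"
    and X Xt :: "real ^ 'p ^ 'n"
    and \<beta> s :: "real ^ 'p"
    and z :: "'w \<Rightarrow> real ^ 'n"
    and \<sigma> lam :: real
    and j :: 'p
  assumes "prob_space M"
    and "\<sigma> > 0"
    and "distributed M lborel z (iso_gauss_density \<sigma>)"
    and "rank X = CARD('p)"
    and "\<forall>k. norm (column k X) = 1"
    and "lam > 0"
    and "\<forall>k. s $ k \<ge> 0"
    and "psd_mat (transpose X ** X - diag_mat s)"
    and "transpose Xt ** X = transpose X ** X - diag_mat s"
    and "\<forall>k. column k Xt \<bullet> column k Xt = 1"
    and "\<beta> $ j = 0"
  shows "(let Sinv = matrix_inv (transpose X ** X + lam *\<^sub>R mat 1);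
              y = (\<lambda>\<omega>. X *v \<beta> + z \<omega>);
              bhat = (\<lambda>\<omega>. (Sinv *v (transpose X *v y \<omega>)) $ j);
              btil = (\<lambda>\<omega>. bhat \<omega> + (Sinv $ j $ j) *
                              (column j Xt \<bullet> y \<omega> - column j X \<bullet> y \<omega>))
          in distr M borel (\<lambda>\<omega>. (bhat \<omega>, btil \<omega>))
             = distr M borel (\<lambda>\<omega>. (btil \<omega>, bhat \<omega>)))"
proof -
  define Sinv where "Sinv = matrix_inv (transpose X ** X + lam *\<^sub>R mat 1)"
  define r where "r = Sinv $ j"
  define c0 where "c0 = Sinv $ j $ j"
  define x where "x = column j X"
  define xt where "xt = column j Xt"
  define dd where "dd = xt - x"
  define a where "a = X *v r"
  define b where "b = a + c0 *\<^sub>R dd"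
  define cst where "cst = a \<bullet> (X *v \<beta>)"
  have c0r: "c0 = r $ j" by (simp add: c0_def r_def)
  have XtX: "column j Xt \<bullet> column k X = (transpose X ** X) $ j $ k - diag_mat s $ j $ k" for k
    using assms(9) mm_entry[of Xt X j k] by simp
  have bhat: "(Sinv *v (transpose X *v w)) $ j = a \<bullet> w" for w
    by (simp add: mv_nth a_def mv_inner r_def)
  have btil: "a \<bullet> w + c0 * (xt \<bullet> w - x \<bullet> w) = b \<bullet> w" for w
    by (simp add: b_def dd_def inner_add_left inner_diff_left)
  have mean: "dd \<bullet> (X *v \<beta>) = 0"
  proof -
    have "xt \<bullet> (X *v \<beta>) = ((transpose X ** X - diag_mat s) *v \<beta>) $ j"
      by (simp add: xt_def col_mv assms(9))
    moreover have "x \<bullet> (X *v \<beta>) = ((transpose X ** X) *v \<beta>) $ j"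
      by (simp add: x_def col_mv)
    ultimately show ?thesis
      by (simp add: dd_def inner_diff_left matrix_vector_mult_diff_rdistrib diag_mv assms(11))
  qed
  have ad: "a \<bullet> dd = - c0 * s $ j"
  proof -
    have "(transpose X *v dd) $ k = - diag_mat s $ j $ k" for k
    proof -
      have "(transpose X *v dd) $ k = (transpose X *v xt) $ k - (transpose X *v x) $ k"
        by (simp only: dd_def matrix_vector_mult_diff_distrib vector_minus_component)
      also have "\<dots> = column k X \<bullet> column j Xt - column k X \<bullet> column j X"
        by (simp only: xt_def x_def tmv_col)
      finally show ?thesis using XtX[of k] mm_entry[of X X j k] by (simp add: inner_commute)
    qed
    then have "transpose X *v dd = - (\<chi> k. diag_mat s $ j $ k)" by (simp add: vec_eq_iff)
    then have "a \<bullet> dd = r \<bullet> (- (\<chi> k. diag_mat s $ j $ k))"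
      by (simp only: a_def mv_inner)
    also have "\<dots> = - (\<Sum>k\<in>UNIV. r $ k * diag_mat s $ j $ k)"
      by (simp add: inner_vec_def sum_negf)
    also have "\<dots> = - r $ j * s $ j"
      by (simp add: diag_entry if_distrib[of "\<lambda>c. _ * c"] cong: if_cong)
    finally show ?thesis by (simp add: c0r)
  qed
  have dd2: "dd \<bullet> dd = 2 * s $ j"
  proof -
    have xx: "x \<bullet> x = 1" using assms(5) by (simp add: x_def power2_norm_eq_inner[symmetric])
    have xtxt: "xt \<bullet> xt = 1" using assms(10) by (simp add: xt_def)
    have "xt \<bullet> x = 1 - s $ j"
      using XtX[of j] mm_entry[of X X j j] xx by (simp add: xt_def x_def diag_entry)
    then show ?thesis using xx xtxt by (simp add: dd_def inner_diff_left inner_diff_right inner_commute)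
  qed
  have abn: "a \<bullet> a = b \<bullet> b"
    by (simp add: b_def inner_add_left inner_add_right inner_commute ad dd2 algebra_simps power2_eq_square)
  have bmean: "b \<bullet> (X *v \<beta>) = cst"
    by (simp add: b_def cst_def inner_add_left mean)
  have e1: "(\<lambda>\<omega>. ((Sinv *v (transpose X *v (X *v \<beta> + z \<omega>))) $ j,
        (Sinv *v (transpose X *v (X *v \<beta> + z \<omega>))) $ j + c0 * (xt \<bullet> (X *v \<beta> + z \<omega>) - x \<bullet> (X *v \<beta> + z \<omega>))))
      = (\<lambda>\<omega>. (cst + a \<bullet> z \<omega>, cst + b \<bullet> z \<omega>))"
    by (simp only: bhat btil) (simp add: inner_add_right cst_def bmean[unfolded cst_def])
  have e2: "(\<lambda>\<omega>. ((Sinv *v (transpose X *v (X *v \<beta> + z \<omega>))) $ j + c0 * (xt \<bullet> (X *v \<beta> + z \<omega>) - x \<bullet> (X *v \<beta> + z \<omega>)),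
        (Sinv *v (transpose X *v (X *v \<beta> + z \<omega>))) $ j))
      = (\<lambda>\<omega>. (cst + b \<bullet> z \<omega>, cst + a \<bullet> z \<omega>))"
    by (simp only: bhat btil) (simp add: inner_add_right cst_def bmean[unfolded cst_def])
  show ?thesis
    unfolding Let_def Sinv_def[symmetric] c0_def[symmetric] xt_def[symmetric] x_def[symmetric] e1 e2
    by (rule swap_general[OF assms(3) abn])
qed

end
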